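(* Let $f:\mathbb{R}^n\to\mathbb{R}$ be differentiable and pseudo-convex, with $\nabla f$ $L$-Lipschitz continuous, and assume the stationary set $X^*$ is non-empty. Let $\{x^k\},\{z^k\}$ be generated by Algorithm 2 (with $\nabla f(x^k)\ne0$ for all $k$). Then for every $x^*\in X^*$ and every $k$, $$\|x^{k+1}-x^*\|^2\le\|x^k-x^*\|^2-\kappa_2\|x^k-z^k\|^2,$$ where $\kappa_2=2\beta-1-\beta^2\nu^2>0$.
   Context: Pseudo-convex: $\nabla f$ pseudo-monotone, i.e. $\langle \nabla f(x),y-x\rangle\ge0\Rightarrow\langle\nabla f(y),y-x\rangle\ge0$ for all $x,y$. $X^*=\{x:\nabla f(x)=0\}$. Algorithm 2: parameters $0<\mu<\nu<1$, $0<\underline{h}<1\le\gamma_0^0\le\overline{h}$, $\theta\in(0,1)$, $\tau>1$, $\beta\in\left(\frac{1-\sqrt{1-\nu^2}}{\nu^2},1\right]$, starting point $x^0$. At iteration $k$: for $\gamma>0$ let $z^k(\gamma)=x^k-\gamma\nabla f(x^k)$ and $r_k(\gamma)=\gamma\|\nabla f(z^k(\gamma))-\nabla f(x^k)\|/\|z^k(\gamma)-x^k\|$; starting from $\gamma_0^k$, while $r_k(\gamma_l^k)>\nu$ set $\gamma_{l+1}^k=\gamma_l^k\theta\min\{1,1/r_k(\gamma_l^k)\}$; let $h_k$ be the first $\gamma_l^k$ with $r_k(\gamma_l^k)\le\nu$. Then $z^k=x^k-h_k\nabla f(x^k)$, $x^{k+1}=x^k-h_k\big(\nabla f(x^k)-\beta(\nabla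 f(x^k)-\nabla f(z^k))\big)$, and $\gamma_0^{k+1}=\mathbf{P}_{[\underline{h},\overline{h}]}(\tau h_k)$ if $r_k(h_k)\le\mu$, else $\gamma_0^{k+1}=\mathbf{P}_{[\underline{h},\overline{h}]}(h_k)$, where $\mathbf{P}_{[a,b]}$ is projection onto $[a,b]$. *)

theory Defs
  imports "HOL-Analysis.Analysis"
begin

definition is_gradient :: "('a::real_inner \<Rightarrow> real) \<Rightarrow> ('a \<Rightarrow> 'a) \<Rightarrow> bool" where
  "is_gradient f g \<longleftrightarrow> (\<forall>x. GDERIV f x :> g x)"

text \<open>Pseudo-convexity: the gradient is pseudo-monotone.\<close>
definition pseudo_monotone :: "('a::real_inner \<Rightarrow> 'a) \<Rightarrow> bool" where
  "pseudo_monotone g \<longleftrightarrow>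
     (\<forall>x y. inner (g x) (y - x) \<ge> 0 \<longrightarrow> inner (g y) (y - x) \<ge> 0)"

definition stationary_set :: "('a::real_inner \<Rightarrow> 'a) \<Rightarrow> 'a set" where
  "stationary_set g = {x. g x = 0}"

definition proj_interval :: "real \<Rightarrow> real \<Rightarrow> real \<Rightarrow> real" where
  "proj_interval a b t = max a (min b t)"

definition ratio :: "('a::real_normed_vector \<Rightarrow> 'a) \<Rightarrow> 'a \<Rightarrow> real \<Rightarrow> real" where
  "ratio g x \<gamma> = \<gamma> * norm (g (x - \<gamma> *\<^sub>R g x) - g x) / norm ((x - \<gamma> *\<^sub>R g x) - x)"

primrec trial :: "('a::real_normed_vector \<Rightarrow> 'a) \<Rightarrow> 'a \<Rightarrow> real \<Rightarrow> real \<Rightarrow> nat \<Rightarrow> real" where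
  "trial g x \<theta> \<gamma>0 0 = \<gamma>0"
| "trial g x \<theta> \<gamma>0 (Suc l) =
     trial g x \<theta> \<gamma>0 l * \<theta> * min 1 (1 / ratio g x (trial g x \<theta> \<gamma>0 l))"

definition first_accepted :: "('a::real_normed_vector \<Rightarrow> 'a) \<Rightarrow> 'a \<Rightarrow> real \<Rightarrow> real \<Rightarrow> real \<Rightarrow> real \<Rightarrow> bool" where
  "first_accepted g x \<theta> \<nu> \<gamma>0 h \<longleftrightarrow>
     (\<exists>l. h = trial g x \<theta> \<gamma>0 l \<and> ratio g x (trial g x \<theta> \<gamma>0 l) \<le> \<nu> \<and>
          (\<forall>j<l. ratio g x (trial g x \<theta> \<gamma>0 j) > \<nu>))"

definition algorithm2 ::
  "('a::real_normed_vector \<Rightarrow> 'a) \<Rightarrow> real \<Rightarrow> real \<Rightarrow> real \<Rightarrow> real \<Rightarrow> real \<Rightarrow> real \<Rightarrow> real \<Rightarrow>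
   (nat \<Rightarrow> 'a) \<Rightarrow> (nat \<Rightarrow> 'a) \<Rightarrow> (nat \<Rightarrow> real) \<Rightarrow> (nat \<Rightarrow> real) \<Rightarrow> bool" where
  "algorithm2 g \<mu> \<nu> hlo hhi \<theta> \<tau> \<beta> x z h \<gamma>0 \<longleftrightarrow>
     (\<forall>k. first_accepted g (x k) \<theta> \<nu> (\<gamma>0 k) (h k)
        \<and> z k = x k - h k *\<^sub>R g (x k)
        \<and> x (Suc k) = x k - h k *\<^sub>R (g (x k) - \<beta> *\<^sub>R (g (x k) - g (z k)))
        \<and> \<gamma>0 (Suc k) = (if ratio g (x k) (h k) \<le> \<mu>
                         then proj_interval hlo hhi (\<tau> * h k)
                         else proj_interval hlo hhi (h k)))"

end

theory Submission
  imports Defs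
begin

lemma key:
  fixes gx gz w :: "'a::real_inner" and h \<beta> \<nu> :: real
  assumes h: "h \<ge> 0" and P: "inner gx w \<ge> 0" and Q: "inner gz (w - h *\<^sub>R gx) \<ge> 0"
    and R: "norm (h *\<^sub>R (gz - gx)) \<le> \<nu> * norm (h *\<^sub>R gx)"
    and b: "0 \<le> \<beta>" "\<beta> \<le> 1"
  shows "(norm (w - h *\<^sub>R (gx - \<beta> *\<^sub>R (gx - gz))))\<^sup>2 \<le> (norm w)\<^sup>2 - (2*\<beta> - 1 - \<beta>\<^sup>2*\<nu>\<^sup>2) * (norm (h *\<^sub>R gx))\<^sup>2"
proof -
  define A where "A = inner gx gx"
  define B where "B = inner gx gz"
  define C where "C = inner gz gz"
  define Pp where "Pp = inner gx w"
  define Qq where "Qq = inner gz w"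
  define W where "W = inner w w"
  have R2: "(norm (h *\<^sub>R (gz - gx)))\<^sup>2 \<le> (\<nu> * norm (h *\<^sub>R gx))\<^sup>2"
    using R by (intro power_mono) auto
  have e1: "(norm (h *\<^sub>R (gz - gx)))\<^sup>2 = h\<^sup>2 * (C - 2*B + A)"
    unfolding power2_norm_eq_inner A_def B_def C_def
    by (simp add: inner_diff_left inner_diff_right inner_commute power2_eq_square algebra_simps)
  have e2: "(\<nu> * norm (h *\<^sub>R gx))\<^sup>2 = \<nu>\<^sup>2 * h\<^sup>2 * A"
    unfolding power_mult_distrib power2_norm_eq_inner A_def
    by (simp add: power2_eq_square algebra_simps)
  have e3: "(norm (h *\<^sub>R gx))\<^sup>2 = h\<^sup>2 * A"
    unfolding power2_norm_eq_inner A_def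
    by (simp add: power2_eq_square algebra_simps)
  have e4: "(norm (w - h *\<^sub>R (gx - \<beta> *\<^sub>R (gx - gz))))\<^sup>2
     = W - 2*h*((1-\<beta>)*Pp + \<beta>*Qq) + h\<^sup>2*((1-\<beta>)\<^sup>2*A + 2*\<beta>*(1-\<beta>)*B + \<beta>\<^sup>2*C)"
    unfolding power2_norm_eq_inner A_def B_def C_def W_def Pp_def Qq_def
    by (simp add: inner_diff_left inner_diff_right inner_commute power2_eq_square algebra_simps)
  have Q': "Qq - h*B \<ge> 0" using Q unfolding Qq_def B_def
    by (simp add: inner_diff_right inner_commute)
  have i1: "h*(1-\<beta>)*Pp \<ge> 0" using h b P unfolding Pp_def by simp
  have i2: "h*\<beta>*(Qq - h*B) \<ge> 0" using h b Q' by simp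
  have i3: "\<beta>\<^sup>2*(h\<^sup>2 * (C - 2*B + A) - \<nu>\<^sup>2 * h\<^sup>2 * A) \<le> 0"
    using R2 e1 e2 by (intro mult_nonneg_nonpos) auto
  have W: "W = norm w * norm w" unfolding W_def by (simp add: norm_eq_sqrt_inner)
  show ?thesis unfolding e3 e4 using i1 i2 i3 W
    by (simp add: power2_eq_square algebra_simps)
qed


lemma trial_nonneg:
  assumes "g0 \<ge> 0" "\<theta> > 0"
  shows "trial g x \<theta> g0 l \<ge> 0"
  using assms by (induction l) (auto simp: ratio_def)

theorem proposition2:
  fixes f :: "real ^ 'n \<Rightarrow> real" and g :: "real ^ 'n \<Rightarrow> real ^ 'n"
    and L \<mu> \<nu> hlo hhi \<theta> \<tau> \<beta> :: real
    and x z :: "nat \<Rightarrow> real ^ 'n" and h \<gamma>0 :: "nat \<Rightarrow> real"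
  assumes grad: "is_gradient f g"
    and pseudo: "pseudo_monotone g"
    and lip: "L-lipschitz_on UNIV g"
    and nonempty: "stationary_set g \<noteq> {}"
    and mu_nu: "0 < \<mu>" "\<mu> < \<nu>" "\<nu> < 1"
    and h_bounds: "0 < hlo" "hlo < 1" "1 \<le> \<gamma>0 0" "\<gamma>0 0 \<le> hhi"
    and theta: "0 < \<theta>" "\<theta> < 1"
    and tau: "1 < \<tau>"
    and beta: "(1 - sqrt (1 - \<nu>\<^sup>2)) / \<nu>\<^sup>2 < \<beta>" "\<beta> \<le> 1"
    and alg: "algorithm2 g \<mu> \<nu> hlo hhi \<theta> \<tau> \<beta> x z h \<gamma>0"
    and nonstat: "\<forall>k. g (x k) \<noteq> 0"
  shows "2 * \<beta> - 1 - \<beta>\<^sup>2 * \<nu>\<^sup>2 > 0 \<and>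
         (\<forall>xs \<in> stationary_set g. \<forall>k.
            (norm (x (Suc k) - xs))\<^sup>2
              \<le> (norm (x k - xs))\<^sup>2 - (2 * \<beta> - 1 - \<beta>\<^sup>2 * \<nu>\<^sup>2) * (norm (x k - z k))\<^sup>2)"
proof -
  have nu0: "\<nu> > 0" using mu_nu by linarith
  define s where "s = sqrt (1 - \<nu>\<^sup>2)"
  have nu2: "\<nu>\<^sup>2 < 1" "\<nu>\<^sup>2 > 0" using mu_nu nu0 by (auto simp: power_less_one_iff)
  have s0: "s \<ge> 0" and s2: "s\<^sup>2 = 1 - \<nu>\<^sup>2" using nu2 unfolding s_def by auto
  have b1: "\<nu>\<^sup>2 * \<beta> - 1 + s > 0"
  proof -
    have "(1 - s) < \<beta> * \<nu>\<^sup>2" using beta(1) nu2 unfolding s_def by (simp add: divide_less_eq)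
    then show ?thesis by (simp add: algebra_simps)
  qed
  have b2: "\<nu>\<^sup>2 * \<beta> - 1 - s < 0"
  proof -
    have "\<nu>\<^sup>2 * \<beta> \<le> \<nu>\<^sup>2" using beta(2) nu2 by (simp add: mult_left_le)
    then show ?thesis using nu2 s0 by linarith
  qed
  have s1: "s \<le> 1" using nu2 unfolding s_def by simp
  have beta0: "\<beta> \<ge> 0"
  proof -
    have "\<nu>\<^sup>2 * \<beta> > 0" using b1 s1 by linarith
    then show ?thesis using nu2 by (simp add: zero_less_mult_iff)
  qed
  have prodneg: "(\<nu>\<^sup>2 * \<beta> - 1 - s) * (\<nu>\<^sup>2 * \<beta> - 1 + s) < 0"
    using b1 b2 by (simp add: mult_neg_pos)
  have eqk: "(\<nu>\<^sup>2 * \<beta> - 1 - s) * (\<nu>\<^sup>2 * \<beta> - 1 + s) = - \<nu>\<^sup>2 * (2 * \<beta> - 1 - \<beta>\<^sup>2 * \<nu>\<^sup>2)"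
    using s2 by (simp add: algebra_simps power2_eq_square)
  have kappa: "2 * \<beta> - 1 - \<beta>\<^sup>2 * \<nu>\<^sup>2 > 0"
  proof -
    have "\<nu>\<^sup>2 * (2 * \<beta> - 1 - \<beta>\<^sup>2 * \<nu>\<^sup>2) > 0" using prodneg eqk by linarith
    then show ?thesis using nu2 by (simp add: zero_less_mult_iff)
  qed
  have step: "\<And>k. first_accepted g (x k) \<theta> \<nu> (\<gamma>0 k) (h k)
        \<and> z k = x k - h k *\<^sub>R g (x k)
        \<and> x (Suc k) = x k - h k *\<^sub>R (g (x k) - \<beta> *\<^sub>R (g (x k) - g (z k)))
        \<and> \<gamma>0 (Suc k) = (if ratio g (x k) (h k) \<le> \<mu>
                         then proj_interval hlo hhi (\<tau> * h k)
                         else proj_interval hlo hhi (h k))"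
    using alg unfolding algorithm2_def by blast
  have g0: "\<gamma>0 k \<ge> 0" for k
  proof (cases k)
    case 0 then show ?thesis using h_bounds by simp
  next
    case (Suc j) then show ?thesis using step[of j] h_bounds by (simp add: proj_interval_def le_max_iff_disj)
  qed
  have hk: "h k \<ge> 0" "ratio g (x k) (h k) \<le> \<nu>" for k
    using step[of k] trial_nonneg[OF g0 theta(1)] unfolding first_accepted_def by auto
  have main: "(norm (x (Suc k) - xs))\<^sup>2
              \<le> (norm (x k - xs))\<^sup>2 - (2 * \<beta> - 1 - \<beta>\<^sup>2 * \<nu>\<^sup>2) * (norm (x k - z k))\<^sup>2"
    if xs: "xs \<in> stationary_set g" for xs k
  proof -
    have gxs: "g xs = 0" using xs unfolding stationary_set_def by simp
    have zk: "z k = x k - h k *\<^sub>R g (x k)" and xk: "x (Suc k) = x k - h k *\<^sub>R (g (x k) - \<beta> *\<^sub>R (g (x k) - g (z k)))"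
      using step[of k] by auto
    have P: "inner (g (x k)) (x k - xs) \<ge> 0"
      using pseudo gxs unfolding pseudo_monotone_def by (metis inner_zero_left order_refl)
    have Q0: "inner (g (z k)) (z k - xs) \<ge> 0"
      using pseudo gxs unfolding pseudo_monotone_def by (metis inner_zero_left order_refl)
    have Q: "inner (g (z k)) ((x k - xs) - h k *\<^sub>R g (x k)) \<ge> 0"
    proof -
      have "(x k - xs) - h k *\<^sub>R g (x k) = z k - xs" using zk by (simp add: algebra_simps)
      then show ?thesis using Q0 by (simp only:)
    qed
    have R: "norm (h k *\<^sub>R (g (z k) - g (x k))) \<le> \<nu> * norm (h k *\<^sub>R g (x k))"
    proof (cases "h k = 0")
      case True then show ?thesis by simp
    next
      case False
      then have hp: "h k > 0" using hk(1)[of k] by simp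
      have np: "norm (h k *\<^sub>R g (x k)) > 0" using hp nonstat by simp
      have "h k * norm (g (z k) - g (x k)) / norm (h k *\<^sub>R g (x k)) \<le> \<nu>"
        using hk(2)[of k] zk unfolding ratio_def by simp
      then have "h k * norm (g (z k) - g (x k)) \<le> \<nu> * norm (h k *\<^sub>R g (x k))"
        using np by (simp add: divide_le_eq)
      then show ?thesis using hp by simp
    qed
    have "(norm ((x k - xs) - h k *\<^sub>R (g (x k) - \<beta> *\<^sub>R (g (x k) - g (z k)))))\<^sup>2
       \<le> (norm (x k - xs))\<^sup>2 - (2*\<beta> - 1 - \<beta>\<^sup>2*\<nu>\<^sup>2) * (norm (h k *\<^sub>R g (x k)))\<^sup>2"
      by (rule key[OF hk(1) P Q R]) (use beta beta0 in \<open>auto\<close>)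
    moreover have "x (Suc k) - xs = (x k - xs) - h k *\<^sub>R (g (x k) - \<beta> *\<^sub>R (g (x k) - g (z k)))"
      using xk by (simp add: algebra_simps)
    moreover have "x k - z k = h k *\<^sub>R g (x k)" using zk by simp
    ultimately show ?thesis by (simp only:)
  qed
  show ?thesis using kappa main by blast
qed

end
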